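(* In the pure braid group $P_3$, the subgroup $Q_{\{2\}}\cap Q_{\{3\}}$ has infinite index in $Q_{\{2\}}$ and is not finitely generated.
   Context: $P_3$ denotes the pure braid group on $3$ strands, generated by $p_{1,2},p_{1,3},p_{2,3}$ subject to the relations $p_{1,2}p_{1,3}p_{2,3}=p_{1,3}p_{2,3}p_{1,2}=p_{2,3}p_{1,2}p_{1,3}$. For $S\subseteq\{1,2,3\}$, $Q_S$ is the subgroup of $P_3$ generated by the $p_{a,b}$ ($a<b$) with $a\in S$ or $b\in S$; thus $Q_{\{2\}}=\langle p_{1,2},p_{2,3}\rangle$ and $Q_{\{3\}}=\langle p_{1,3},p_{2,3}\rangle$. *)

theory Defs
  imports "HOL-Algebra.Algebra"
begin

datatype pgen = P12 | P13 | P23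

fun pgen_ends :: "pgen \<Rightarrow> nat \<times> nat" where
  "pgen_ends P12 = (1, 2)"
| "pgen_ends P13 = (1, 3)"
| "pgen_ends P23 = (2, 3)"

text \<open>A letter (b, g) stands for g if b = True and for g inverse if b = False.\<close>
type_synonym pword = "(bool \<times> pgen) list"

definition lw :: "pgen list \<Rightarrow> pword" where
  "lw gs = map (\<lambda>g. (True, g)) gs"

inductive_set braid_rel :: "(pword \<times> pword) set" where
  refl: "(w, w) \<in> braid_rel"
| sym: "(u, v) \<in> braid_rel \<Longrightarrow> (v, u) \<in> braid_rel"
| trans: "(u, v) \<in> braid_rel \<Longrightarrow> (v, w) \<in> braid_rel \<Longrightarrow> (u, w) \<in> braid_rel"
| cancel: "(u @ [(b, g), (\<not> b, g)] @ v, u @ v) \<in> braid_rel"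
| rel1: "(u @ lw [P12, P13, P23] @ v, u @ lw [P13, P23, P12] @ v) \<in> braid_rel"
| rel2: "(u @ lw [P13, P23, P12] @ v, u @ lw [P23, P12, P13] @ v) \<in> braid_rel"

definition P3 :: "pword set monoid" where
  "P3 = \<lparr> carrier = UNIV // braid_rel,
          monoid.mult = (\<lambda>A B. braid_rel `` {x @ y | x y. x \<in> A \<and> y \<in> B}),
          monoid.one = braid_rel `` {[]} \<rparr>"

definition pgen_elt :: "pgen \<Rightarrow> pword set" where
  "pgen_elt g = braid_rel `` {[(True, g)]}"

definition Q :: "nat set \<Rightarrow> pword set set" where
  "Q S = generate P3 (pgen_elt ` {g. fst (pgen_ends g) \<in> S \<or> snd (pgen_ends g) \<in> S})"

end

theory Submission
  imports Defs
begin

abbreviation R where "R \<equiv> braid_rel"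

definition cls :: "pword \<Rightarrow> pword set" where "cls w = braid_rel `` {w}"

lemma R_equiv: "equiv UNIV braid_rel"
  unfolding equiv_def refl_on_def sym_def trans_def
  by (auto intro: braid_rel.intros)

lemma R_app_left: "(u, v) \<in> R \<Longrightarrow> (x @ u, x @ v) \<in> R"
proof (induction rule: braid_rel.induct)
  case (cancel u b g v)
  then show ?case using braid_rel.cancel[of "x @ u" b g v] by simp
next
  case (rel1 u v)
  then show ?case using braid_rel.rel1[of "x @ u" v] by simp
next
  case (rel2 u v)
  then show ?case using braid_rel.rel2[of "x @ u" v] by simp
qed (auto intro: braid_rel.intros)

lemma R_app_right: "(u, v) \<in> R \<Longrightarrow> (u @ y, v @ y) \<in> R"
proof (induction rule: braid_rel.induct)
  case (cancel u b g v)
  then show ?case using braid_rel.cancel[of u b g "v @ y"] by simp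
next
  case (rel1 u v)
  then show ?case using braid_rel.rel1[of u "v @ y"] by simp
next
  case (rel2 u v)
  then show ?case using braid_rel.rel2[of u "v @ y"] by simp
qed (auto intro: braid_rel.intros)

lemma R_app: "(u, v) \<in> R \<Longrightarrow> (x, y) \<in> R \<Longrightarrow> (u @ x, v @ y) \<in> R"
  by (meson R_app_left R_app_right braid_rel.trans)

lemma cls_eq_iff: "cls u = cls v \<longleftrightarrow> (u, v) \<in> R"
  unfolding cls_def using R_equiv by (simp add: equiv_class_eq_iff)

lemma mem_cls: "x \<in> cls w \<longleftrightarrow> (w, x) \<in> R"
  unfolding cls_def by simp

lemma carrier_P3: "carrier P3 = range cls"
  unfolding P3_def cls_def quotient_def by auto

lemma one_P3: "\<one>\<^bsub>P3\<^esub> = cls []"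
  unfolding P3_def cls_def by simp

lemma mult_P3: "cls u \<otimes>\<^bsub>P3\<^esub> cls v = cls (u @ v)"
proof -
  have "braid_rel `` {x @ y |x y. x \<in> cls u \<and> y \<in> cls v} = cls (u @ v)"
  proof
    show "braid_rel `` {x @ y |x y. x \<in> cls u \<and> y \<in> cls v} \<subseteq> cls (u @ v)"
      by (auto simp: mem_cls) (meson R_app braid_rel.trans)
    show "cls (u @ v) \<subseteq> braid_rel `` {x @ y |x y. x \<in> cls u \<and> y \<in> cls v}"
    proof
      fix x assume "x \<in> cls (u @ v)"
      then have "(u @ v, x) \<in> R" by (simp add: mem_cls)
      moreover have "u @ v \<in> {x @ y |x y. x \<in> cls u \<and> y \<in> cls v}"
        by (auto simp: mem_cls intro: braid_rel.refl)
      ultimately show "x \<in> braid_rel `` {x @ y |x y. x \<in> cls u \<and> y \<in> cls v}"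
        by blast
    qed
  qed
  then show ?thesis unfolding P3_def by simp
qed

fun winv :: "pword \<Rightarrow> pword" where
  "winv [] = []"
| "winv (x # w) = winv w @ [(\<not> fst x, snd x)]"

lemma winv_cancel: "(winv w @ w, []) \<in> R"
proof (induction w)
  case Nil
  then show ?case by (simp add: braid_rel.refl)
next
  case (Cons x w)
  obtain b g where x: "x = (b, g)" by force
  have "(winv w @ [(\<not> b, g), (\<not>\<not> b, g)] @ w, winv w @ w) \<in> R"
    by (rule braid_rel.cancel)
  then show ?case using Cons x by (auto intro: braid_rel.trans)
qed

lemma group_P3: "group P3"
proof (rule groupI)
  fix x y assume "x \<in> carrier P3" "y \<in> carrier P3"
  then show "x \<otimes>\<^bsub>P3\<^esub> y \<in> carrier P3"
    by (auto simp: carrier_P3 mult_P3)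
next
  show "\<one>\<^bsub>P3\<^esub> \<in> carrier P3" by (simp add: carrier_P3 one_P3)
next
  fix x y z assume "x \<in> carrier P3" "y \<in> carrier P3" "z \<in> carrier P3"
  then show "x \<otimes>\<^bsub>P3\<^esub> y \<otimes>\<^bsub>P3\<^esub> z = x \<otimes>\<^bsub>P3\<^esub> (y \<otimes>\<^bsub>P3\<^esub> z)"
    by (auto simp: carrier_P3 mult_P3)
next
  fix x assume "x \<in> carrier P3"
  then show "\<one>\<^bsub>P3\<^esub> \<otimes>\<^bsub>P3\<^esub> x = x"
    by (auto simp: carrier_P3 mult_P3 one_P3)
next
  fix x assume "x \<in> carrier P3"
  then obtain w where "x = cls w" by (auto simp: carrier_P3)
  then show "\<exists>y\<in>carrier P3. y \<otimes>\<^bsub>P3\<^esub> x = \<one>\<^bsub>P3\<^esub>"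
    using winv_cancel[of w]
    by (auto simp: carrier_P3 mult_P3 one_P3 cls_eq_iff intro!: bexI[of _ "cls (winv w)"])
qed

interpretation P: group P3 by (rule group_P3)

lemma cls_in [simp]: "cls w \<in> carrier P3"
  by (simp add: carrier_P3)

lemma inv_P3: "inv\<^bsub>P3\<^esub> (cls w) = cls (winv w)"
  by (rule P.inv_equality) (auto simp: mult_P3 one_P3 cls_eq_iff winv_cancel)


definition lift :: "(pword \<Rightarrow> 'b) \<Rightarrow> pword set \<Rightarrow> 'b" where
  "lift f A = f (SOME w. w \<in> A)"

lemma lift_cls:
  assumes "\<And>u v. (u, v) \<in> R \<Longrightarrow> f u = f v"
  shows "lift f (cls w) = f w"
proof -
  have "w \<in> cls w" by (simp add: mem_cls braid_rel.refl)
  then have "(SOME x. x \<in> cls w) \<in> cls w" by (rule someI)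
  then show ?thesis unfolding lift_def using assms by (simp add: mem_cls)
qed

definition cnt :: "pgen \<Rightarrow> pword \<Rightarrow> int" where
  "cnt g w = sum_list (map (\<lambda>(b, h). if h = g then (if b then 1 else -1) else 0) w)"

lemma cnt_append [simp]: "cnt g (u @ v) = cnt g u + cnt g v"
  by (simp add: cnt_def)

lemma cnt_Cons [simp]: "cnt g ((b, h) # w) = (if h = g then (if b then 1 else -1) else 0) + cnt g w"
  by (simp add: cnt_def)

lemma cnt_Nil [simp]: "cnt g [] = 0"
  by (simp add: cnt_def)

lemma cnt_resp: "(u, v) \<in> R \<Longrightarrow> cnt g u = cnt g v"
  by (induction rule: braid_rel.induct) (auto simp: lw_def)

lemma Cnt_cls [simp]: "lift (cnt g) (cls w) = cnt g w"
  by (rule lift_cls) (rule cnt_resp)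

lemma gens_eq: "pgen_elt g = cls [(True, g)]"
  by (simp add: pgen_elt_def cls_def)

lemma Cnt_generate:
  assumes "x \<in> generate P3 (pgen_elt ` Gs)" "g \<notin> Gs"
  shows "lift (cnt g) x = 0"
  using assms(1)
proof (induction rule: generate.induct)
  case one
  then show ?case by (simp add: one_P3)
next
  case (incl h)
  then show ?case using assms(2) by (auto simp: gens_eq)
next
  case (inv h)
  then show ?case using assms(2) by (auto simp: gens_eq inv_P3)
next
  case (eng h1 h2)
  have "generate P3 (pgen_elt ` Gs) \<subseteq> carrier P3"
    by (rule P.generate_incl) (auto simp: gens_eq)
  with eng obtain u v where "h1 = cls u" "h2 = cls v" by (metis (no_types, lifting) rangeE subsetD carrier_P3)
  with eng show ?case by (simp add: mult_P3)
qed

lemma word_in_generate: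
  assumes "snd ` set w \<subseteq> Gs"
  shows "cls w \<in> generate P3 (pgen_elt ` Gs)"
  using assms
proof (induction w)
  case Nil
  then show ?case using generate.one[of P3] by (simp add: one_P3)
next
  case (Cons x w)
  obtain b g where x: "x = (b, g)" by force
  have sg: "subgroup (generate P3 (pgen_elt ` Gs)) P3"
    by (rule P.generate_is_subgroup) (auto simp: gens_eq)
  have "cls [x] \<in> generate P3 (pgen_elt ` Gs)"
  proof (cases b)
    case True
    then show ?thesis using Cons x generate.incl[of "pgen_elt g" "pgen_elt ` Gs" P3] by (auto simp: gens_eq)
  next
    case False
    then show ?thesis using Cons x generate.inv[of "pgen_elt g" "pgen_elt ` Gs" P3] by (auto simp: gens_eq inv_P3)
  qed
  moreover have "cls w \<in> generate P3 (pgen_elt ` Gs)" using Cons by auto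
  ultimately have "cls [x] \<otimes>\<^bsub>P3\<^esub> cls w \<in> generate P3 (pgen_elt ` Gs)"
    using subgroup.m_closed[OF sg] by blast
  then show ?case by (simp add: mult_P3)
qed

lemma Q2_eq: "Q {2} = generate P3 (pgen_elt ` {P12, P23})"
proof -
  have "{g. fst (pgen_ends g) \<in> {2} \<or> snd (pgen_ends g) \<in> {2}} = {P12, P23}"
    by (auto; case_tac x; auto)
  then show ?thesis by (simp add: Q_def)
qed

lemma Q3_eq: "Q {3} = generate P3 (pgen_elt ` {P13, P23})"
proof -
  have "{g. fst (pgen_ends g) \<in> {3} \<or> snd (pgen_ends g) \<in> {3}} = {P13, P23}"
    by (auto; case_tac x; auto)
  then show ?thesis by (simp add: Q_def)
qed


lemma Q_carrier: "Q {2} \<subseteq> carrier P3" "Q {3} \<subseteq> carrier P3"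
  unfolding Q2_eq Q3_eq by (rule P.generate_incl; auto simp: gens_eq)+

lemma cnt_rep [simp]: "cnt P12 (replicate n (True, P12)) = int n"
  by (induction n) auto

lemma part1: "infinite (rcosets\<^bsub>P3\<lparr>carrier := Q {2}\<rparr>\<^esub> (Q {2} \<inter> Q {3}))"
proof
  define H where "H = Q {2} \<inter> Q {3}"
  define pw where "pw n = cls (replicate n (True, P12))" for n
  assume fin: "finite (rcosets\<^bsub>P3\<lparr>carrier := Q {2}\<rparr>\<^esub> (Q {2} \<inter> Q {3}))"
  have pwQ: "pw n \<in> Q {2}" for n
    unfolding pw_def Q2_eq by (rule word_in_generate) auto
  have sub: "(\<lambda>n. H #>\<^bsub>P3\<^esub> pw n) ` UNIV \<subseteq> rcosets\<^bsub>P3\<lparr>carrier := Q {2}\<rparr>\<^esub> (Q {2} \<inter> Q {3})"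
    using pwQ unfolding RCOSETS_def r_coset_def H_def by auto
  have oneH: "\<one>\<^bsub>P3\<^esub> \<in> H"
    unfolding H_def Q2_eq Q3_eq by (auto intro: generate.one)
  have inj: "inj (\<lambda>n. H #>\<^bsub>P3\<^esub> pw n)"
  proof (rule injI)
    fix n m assume eq: "H #>\<^bsub>P3\<^esub> pw n = H #>\<^bsub>P3\<^esub> pw m"
    have "\<one>\<^bsub>P3\<^esub> \<otimes>\<^bsub>P3\<^esub> pw n \<in> H #>\<^bsub>P3\<^esub> pw n"
      using oneH unfolding r_coset_def by auto
    then have "pw n \<in> H #>\<^bsub>P3\<^esub> pw m" using eq by (simp add: pw_def)
    then obtain h where h: "h \<in> H" "pw n = h \<otimes>\<^bsub>P3\<^esub> pw m"
      unfolding r_coset_def by auto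
    have "h \<in> carrier P3" using h Q_carrier unfolding H_def by auto
    then obtain u where u: "h = cls u" by (auto simp: carrier_P3)
    have "lift (cnt P12) h = 0"
      using h(1) Cnt_generate[of h "{P13, P23}" P12] unfolding H_def Q3_eq by auto
    then have "cnt P12 u = 0" using u by simp
    moreover have "cls (replicate n (True, P12)) = cls (u @ replicate m (True, P12))"
      using h u by (simp add: pw_def mult_P3)
    then have "cnt P12 (replicate n (True, P12)) = cnt P12 (u @ replicate m (True, P12))"
      unfolding cls_eq_iff by (rule cnt_resp)
    ultimately show "n = m" by simp
  qed
  have "infinite ((\<lambda>n. H #>\<^bsub>P3\<^esub> pw n) ` UNIV)"
    using inj by (simp add: range_inj_infinite)
  then show False using fin sub finite_subset by blast
qed


type_synonym elt = "(int \<Rightarrow> int) \<times> int"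

definition mul :: "elt \<Rightarrow> elt \<Rightarrow> elt" where
  "mul x y = (\<lambda>k. fst x k + fst y (k - snd x), snd x + snd y)"

definition e0 :: elt where "e0 = (\<lambda>_. 0, 0)"

definition dl :: "int \<Rightarrow> int \<Rightarrow> int" where
  "dl j = (\<lambda>k. if k = j then 1 else 0)"

fun rl :: "bool \<times> pgen \<Rightarrow> elt" where
  "rl (True, P12) = (\<lambda>_. 0, 1)"
| "rl (False, P12) = (\<lambda>_. 0, -1)"
| "rl (True, P13) = (dl 0, -1)"
| "rl (False, P13) = (\<lambda>k. - dl 1 k, 1)"
| "rl (True, P23) = (\<lambda>k. - dl 1 k, 0)"
| "rl (False, P23) = (dl 1, 0)"

fun rho :: "pword \<Rightarrow> elt" where
  "rho [] = e0"
| "rho (x # w) = mul (rl x) (rho w)"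

lemma mul_assoc: "mul (mul x y) z = mul x (mul y z)"
  by (simp add: mul_def algebra_simps)

lemma mul_e0 [simp]: "mul e0 x = x"
  by (simp add: mul_def e0_def)

lemma rho_append: "rho (u @ v) = mul (rho u) (rho v)"
  by (induction u) (auto simp: mul_assoc)

lemma rho_cancel: "rho [(b, g), (\<not> b, g)] = e0"
  by (cases b; cases g) (auto simp: mul_def e0_def dl_def fun_eq_iff)

lemma rho_r1: "rho (lw [P12, P13, P23]) = e0"
  by (auto simp: lw_def mul_def e0_def dl_def fun_eq_iff)
lemma rho_r2: "rho (lw [P13, P23, P12]) = e0"
  by (auto simp: lw_def mul_def e0_def dl_def fun_eq_iff)
lemma rho_r3: "rho (lw [P23, P12, P13]) = e0"
  by (auto simp: lw_def mul_def e0_def dl_def fun_eq_iff)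

lemma rho_resp: "(u, v) \<in> R \<Longrightarrow> rho u = rho v"
proof (induction rule: braid_rel.induct)
  case (cancel u b g v)
  have "rho (u @ [(b, g), (\<not> b, g)] @ v) = mul (rho u) (mul (rho [(b, g), (\<not> b, g)]) (rho v))"
    by (simp only: rho_append)
  then show ?case using rho_cancel[of b g] by (simp add: rho_append)
next
  case (rel1 u v)
  then show ?case using rho_r1 rho_r2 by (simp add: rho_append)
next
  case (rel2 u v)
  then show ?case using rho_r3 rho_r2 by (simp add: rho_append)
qed auto

lemma Rho_cls [simp]: "lift rho (cls w) = rho w"
  by (rule lift_cls) (rule rho_resp)

lemma rl_bound: "k > 1 \<Longrightarrow> fst (rl x) k = 0"
  by (cases x rule: rl.cases) (auto simp: dl_def)

lemma rho_bound: "\<exists>N. \<forall>k>N. fst (rho w) k = 0"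
proof (induction w)
  case Nil
  then show ?case by (auto simp: e0_def)
next
  case (Cons x w)
  then obtain N where N: "\<forall>k>N. fst (rho w) k = 0" by blast
  show ?case
    by (rule exI[of _ "max 1 (N + snd (rl x))"]) (auto simp: mul_def rl_bound N)
qed

lemma rho_snd: "snd (rho w) = cnt P12 w - cnt P13 w"
proof (induction w)
  case Nil
  then show ?case by (simp add: e0_def)
next
  case (Cons x w)
  then show ?case by (cases x rule: rl.cases) (auto simp: mul_def)
qed

definition cw :: pword where "cw = lw [P13, P23, P12]"

lemma cw_comm_word: "(cw @ [(True, g)], [(True, g)] @ cw) \<in> R"
proof (cases g)
  case P12
  have "([] @ lw [P12, P13, P23] @ [(True, P12)], [] @ lw [P13, P23, P12] @ [(True, P12)]) \<in> R"
    by (rule braid_rel.rel1)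
  then show ?thesis using P12 by (auto simp: cw_def lw_def intro: braid_rel.sym)
next
  case P13
  have "([(True, P13)] @ lw [P13, P23, P12] @ [], [(True, P13)] @ lw [P23, P12, P13] @ []) \<in> R"
    by (rule braid_rel.rel2)
  then show ?thesis using P13 by (auto simp: cw_def lw_def intro: braid_rel.sym)
next
  case P23
  have a: "([] @ lw [P13, P23, P12] @ [(True, P23)], [] @ lw [P23, P12, P13] @ [(True, P23)]) \<in> R"
    by (rule braid_rel.rel2)
  have b: "([(True, P23)] @ lw [P12, P13, P23] @ [], [(True, P23)] @ lw [P13, P23, P12] @ []) \<in> R"
    by (rule braid_rel.rel1)
  show ?thesis using P23 braid_rel.trans[OF a] b by (auto simp: cw_def lw_def)
qed

lemma c_comm_gen: "cls cw \<otimes>\<^bsub>P3\<^esub> cls [(True, g)] = cls [(True, g)] \<otimes>\<^bsub>P3\<^esub> cls cw"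
  using cw_comm_word[of g] by (simp add: mult_P3 cls_eq_iff)

lemma comm_inv:
  assumes "c \<in> carrier P3" "y \<in> carrier P3" "c \<otimes>\<^bsub>P3\<^esub> y = y \<otimes>\<^bsub>P3\<^esub> c"
  shows "c \<otimes>\<^bsub>P3\<^esub> inv\<^bsub>P3\<^esub> y = inv\<^bsub>P3\<^esub> y \<otimes>\<^bsub>P3\<^esub> c"
proof -
  have "inv\<^bsub>P3\<^esub> y \<otimes>\<^bsub>P3\<^esub> c = inv\<^bsub>P3\<^esub> y \<otimes>\<^bsub>P3\<^esub> c \<otimes>\<^bsub>P3\<^esub> (y \<otimes>\<^bsub>P3\<^esub> inv\<^bsub>P3\<^esub> y)"
    using assms by simp
  also have "\<dots> = inv\<^bsub>P3\<^esub> y \<otimes>\<^bsub>P3\<^esub> (c \<otimes>\<^bsub>P3\<^esub> y) \<otimes>\<^bsub>P3\<^esub> inv\<^bsub>P3\<^esub> y"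
    using assms(1,2) by (simp add: P.m_assoc)
  also have "\<dots> = inv\<^bsub>P3\<^esub> y \<otimes>\<^bsub>P3\<^esub> (y \<otimes>\<^bsub>P3\<^esub> c) \<otimes>\<^bsub>P3\<^esub> inv\<^bsub>P3\<^esub> y"
    using assms by simp
  also have "\<dots> = (inv\<^bsub>P3\<^esub> y \<otimes>\<^bsub>P3\<^esub> y) \<otimes>\<^bsub>P3\<^esub> c \<otimes>\<^bsub>P3\<^esub> inv\<^bsub>P3\<^esub> y"
    using assms(1,2) by (metis P.inv_closed P.m_assoc P.m_closed)
  also have "\<dots> = c \<otimes>\<^bsub>P3\<^esub> inv\<^bsub>P3\<^esub> y"
    using assms by simp
  finally show ?thesis by simp
qed

lemma c_central: "x \<in> carrier P3 \<Longrightarrow> cls cw \<otimes>\<^bsub>P3\<^esub> x = x \<otimes>\<^bsub>P3\<^esub> cls cw"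
proof -
  assume "x \<in> carrier P3"
  then obtain w where x: "x = cls w" by (auto simp: carrier_P3)
  have "cls cw \<otimes>\<^bsub>P3\<^esub> cls w = cls w \<otimes>\<^bsub>P3\<^esub> cls cw"
  proof (induction w)
    case Nil
    then show ?case by (simp flip: one_P3)
  next
    case (Cons a w)
    obtain b g where a: "a = (b, g)" by force
    have ca: "cls cw \<otimes>\<^bsub>P3\<^esub> cls [a] = cls [a] \<otimes>\<^bsub>P3\<^esub> cls cw"
    proof (cases b)
      case True
      then show ?thesis using a c_comm_gen by simp
    next
      case False
      have "cls [(False, g)] = inv\<^bsub>P3\<^esub> cls [(True, g)]" by (simp add: inv_P3)
      then show ?thesis using a False comm_inv[OF cls_in cls_in c_comm_gen] by simp
    qed
    have "cls cw \<otimes>\<^bsub>P3\<^esub> cls (a # w) = cls cw \<otimes>\<^bsub>P3\<^esub> cls [a] \<otimes>\<^bsub>P3\<^esub> cls w"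
      by (simp add: mult_P3)
    also have "\<dots> = cls [a] \<otimes>\<^bsub>P3\<^esub> (cls cw \<otimes>\<^bsub>P3\<^esub> cls w)"
      using ca by (simp add: P.m_assoc)
    also have "\<dots> = cls [a] \<otimes>\<^bsub>P3\<^esub> (cls w \<otimes>\<^bsub>P3\<^esub> cls cw)"
      using Cons by simp
    also have "\<dots> = cls (a # w) \<otimes>\<^bsub>P3\<^esub> cls cw"
      by (simp add: mult_P3)
    finally show ?case .
  qed
  then show ?thesis using x by simp
qed


definition kw :: pword where "kw = [(False, P23), (False, P13)]"

lemma k_c: "cls kw \<otimes>\<^bsub>P3\<^esub> cls cw = cls [(True, P12)]"
proof -
  have a: "([(False, P23)] @ [(False, P13), (\<not> False, P13)] @ [(True, P23), (True, P12)],
            [(False, P23)] @ [(True, P23), (True, P12)]) \<in> R"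
    by (rule braid_rel.cancel)
  have b: "([] @ [(False, P23), (\<not> False, P23)] @ [(True, P12)], [] @ [(True, P12)]) \<in> R"
    by (rule braid_rel.cancel)
  show ?thesis using braid_rel.trans[OF a] b
    by (simp add: mult_P3 cls_eq_iff kw_def cw_def lw_def)
qed

lemma kw_Q3: "cls kw \<in> Q {3}"
  unfolding Q3_eq kw_def by (rule word_in_generate) auto

lemma conj_eq:
  assumes x: "x \<in> carrier P3"
  shows "cls [(True, P12)] \<otimes>\<^bsub>P3\<^esub> x \<otimes>\<^bsub>P3\<^esub> inv\<^bsub>P3\<^esub> cls [(True, P12)]
       = cls kw \<otimes>\<^bsub>P3\<^esub> x \<otimes>\<^bsub>P3\<^esub> inv\<^bsub>P3\<^esub> cls kw"
proof -
  define k where "k = cls kw"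
  define c where "c = cls cw"
  have kc: "k \<in> carrier P3" "c \<in> carrier P3" by (simp_all add: k_def c_def)
  have cx: "c \<otimes>\<^bsub>P3\<^esub> x = x \<otimes>\<^bsub>P3\<^esub> c" unfolding c_def using c_central[OF x] .
  have "cls [(True, P12)] \<otimes>\<^bsub>P3\<^esub> x \<otimes>\<^bsub>P3\<^esub> inv\<^bsub>P3\<^esub> cls [(True, P12)]
      = k \<otimes>\<^bsub>P3\<^esub> c \<otimes>\<^bsub>P3\<^esub> x \<otimes>\<^bsub>P3\<^esub> (inv\<^bsub>P3\<^esub> c \<otimes>\<^bsub>P3\<^esub> inv\<^bsub>P3\<^esub> k)"
  proof -
    have e: "cls [(True, P12)] = k \<otimes>\<^bsub>P3\<^esub> c" using k_c by (simp add: k_def c_def)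
    show ?thesis by (simp only: e) (simp add: P.inv_mult_group kc)
  qed
  also have "\<dots> = k \<otimes>\<^bsub>P3\<^esub> (c \<otimes>\<^bsub>P3\<^esub> x) \<otimes>\<^bsub>P3\<^esub> inv\<^bsub>P3\<^esub> c \<otimes>\<^bsub>P3\<^esub> inv\<^bsub>P3\<^esub> k"
    using kc x by (metis P.inv_closed P.m_assoc P.m_closed)
  also have "\<dots> = k \<otimes>\<^bsub>P3\<^esub> (x \<otimes>\<^bsub>P3\<^esub> c) \<otimes>\<^bsub>P3\<^esub> inv\<^bsub>P3\<^esub> c \<otimes>\<^bsub>P3\<^esub> inv\<^bsub>P3\<^esub> k"
    by (simp only: cx)
  also have "\<dots> = k \<otimes>\<^bsub>P3\<^esub> x \<otimes>\<^bsub>P3\<^esub> (c \<otimes>\<^bsub>P3\<^esub> inv\<^bsub>P3\<^esub> c) \<otimes>\<^bsub>P3\<^esub> inv\<^bsub>P3\<^esub> k"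
    using kc x by (metis P.inv_closed P.m_assoc P.m_closed)
  also have "\<dots> = k \<otimes>\<^bsub>P3\<^esub> x \<otimes>\<^bsub>P3\<^esub> inv\<^bsub>P3\<^esub> k"
    using kc x by simp
  finally show ?thesis by (simp add: k_def)
qed

fun ws :: "nat \<Rightarrow> pword" where
  "ws 0 = [(True, P23)]"
| "ws (Suc n) = (True, P12) # ws n @ [(False, P12)]"

lemma ws_Q2: "cls (ws n) \<in> Q {2}"
proof -
  have "snd ` set (ws n) \<subseteq> {P12, P23}" by (induction n) auto
  then show ?thesis unfolding Q2_eq by (rule word_in_generate)
qed

lemma ws_Q3: "cls (ws n) \<in> Q {3}"
proof (induction n)
  case 0
  then show ?case unfolding Q3_eq by (intro word_in_generate) auto
next
  case (Suc n)
  have sg: "subgroup (Q {3}) P3"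
    unfolding Q3_eq by (rule P.generate_is_subgroup) (auto simp: gens_eq)
  have "cls (ws (Suc n)) = cls [(True, P12)] \<otimes>\<^bsub>P3\<^esub> cls (ws n) \<otimes>\<^bsub>P3\<^esub> inv\<^bsub>P3\<^esub> cls [(True, P12)]"
    by (simp add: mult_P3 inv_P3)
  also have "\<dots> = cls kw \<otimes>\<^bsub>P3\<^esub> cls (ws n) \<otimes>\<^bsub>P3\<^esub> inv\<^bsub>P3\<^esub> cls kw"
    by (rule conj_eq) simp
  also have "\<dots> \<in> Q {3}"
    using sg Suc kw_Q3 by (intro subgroup.m_closed subgroup.m_inv_closed) auto
  finally show ?case .
qed

lemma rho_ws: "rho (ws n) = (\<lambda>k. - dl (int n + 1) k, 0)"
proof (induction n)
  case 0
  then show ?case by (simp add: mul_def e0_def)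
next
  case (Suc n)
  then show ?case by (simp add: rho_append mul_def e0_def dl_def fun_eq_iff)
qed


lemma finite_bound:
  assumes "finite F" "\<forall>x\<in>F. \<exists>N::int. \<forall>k>N. P x k"
  shows "\<exists>N. \<forall>x\<in>F. \<forall>k>N. P x k"
  using assms
proof (induction F rule: finite_induct)
  case empty
  then show ?case by auto
next
  case (insert a F)
  then obtain N1 where N1: "\<forall>x\<in>F. \<forall>k>N1. P x k" by auto
  from insert obtain N2 where N2: "\<forall>k>N2. P a k" by auto
  show ?case
  proof (rule exI[of _ "max N1 N2"], intro ballI allI impI)
    fix x k assume "x \<in> insert a F" "max N1 N2 < k"
    then show "P x k" using N1 N2 by auto
  qed
qed

lemma H_snd:
  assumes "h \<in> Q {2} \<inter> Q {3}"
  shows "snd (lift rho h) = 0"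
proof -
  have "h \<in> carrier P3" using assms Q_carrier by auto
  then obtain w where w: "h = cls w" by (auto simp: carrier_P3)
  have "lift (cnt P12) h = 0"
    using assms Cnt_generate[of h "{P13, P23}" P12] unfolding Q3_eq by auto
  moreover have "lift (cnt P13) h = 0"
    using assms Cnt_generate[of h "{P12, P23}" P13] unfolding Q2_eq by auto
  ultimately show ?thesis using w by (simp add: rho_snd)
qed

lemma part2:
  "\<not> (\<exists>F. finite F \<and> F \<subseteq> Q {2} \<inter> Q {3} \<and> generate P3 F = Q {2} \<inter> Q {3})"
proof
  assume "\<exists>F. finite F \<and> F \<subseteq> Q {2} \<inter> Q {3} \<and> generate P3 F = Q {2} \<inter> Q {3}"
  then obtain F where F: "finite F" "F \<subseteq> Q {2} \<inter> Q {3}" "generate P3 F = Q {2} \<inter> Q {3}"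
    by blast
  have Fc: "F \<subseteq> carrier P3" using F(2) Q_carrier by auto
  have "\<forall>x\<in>F. \<exists>N::int. \<forall>k>N. fst (lift rho x) k = 0"
  proof
    fix x assume "x \<in> F"
    then obtain w where xw: "x = cls w" using Fc by (auto simp: carrier_P3)
    then have lx: "lift rho x = rho w" by simp
    show "\<exists>N::int. \<forall>k>N. fst (lift rho x) k = 0" unfolding lx by (rule rho_bound)
  qed
  from finite_bound[OF F(1) this] obtain N where N: "\<forall>x\<in>F. \<forall>k>N. fst (lift rho x) k = 0"
    by (elim exE)
  have inv_step: "snd (rho (winv w)) = 0 \<and> (\<forall>k>N. fst (rho (winv w)) k = 0)"
    if "snd (rho w) = 0" "\<forall>k>N. fst (rho w) k = 0" for w
  proof -
    have "rho (winv w @ w) = rho []" using winv_cancel[of w] by (rule rho_resp)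
    then have e: "mul (rho (winv w)) (rho w) = e0" by (simp add: rho_append)
    then have s: "snd (rho (winv w)) = 0" using that by (simp add: mul_def e0_def)
    have "\<forall>k. fst (rho (winv w)) k + fst (rho w) (k - snd (rho (winv w))) = 0"
      using e by (simp add: mul_def e0_def fun_eq_iff)
    then have "\<forall>k. fst (rho (winv w)) k + fst (rho w) k = 0" using s by simp
    then show ?thesis using s that by (metis add_0_right)
  qed
  have inv: "snd (lift rho x) = 0 \<and> (\<forall>k>N. fst (lift rho x) k = 0)"
    if "x \<in> generate P3 F" for x
    using that
  proof (induction rule: generate.induct)
    case one
    then show ?case by (simp add: one_P3 e0_def)
  next
    case (incl h)
    then have "h \<in> Q {2} \<inter> Q {3}" using F(2) by blast
    then show ?case using N incl H_snd by blast
  next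
    case (inv h)
    then obtain w where w: "h = cls w" using Fc by (auto simp: carrier_P3)
    have hH: "h \<in> Q {2} \<inter> Q {3}" using F(2) inv by blast
    have "snd (rho w) = 0" using H_snd[OF hH] w by simp
    moreover have "\<forall>k>N. fst (lift rho (cls w)) k = 0" using N inv w by blast
    then have "\<forall>k>N. fst (rho w) k = 0" by simp
    ultimately
    show ?case using inv_step[of w] w by (simp add: inv_P3)
  next
    case (eng h1 h2)
    have "generate P3 F \<subseteq> carrier P3" by (rule P.generate_incl[OF Fc])
    with eng obtain u v where uv: "h1 = cls u" "h2 = cls v"
      by (metis (no_types, lifting) rangeE subsetD carrier_P3)
    have r: "lift rho (h1 \<otimes>\<^bsub>P3\<^esub> h2) = mul (rho u) (rho v)"
      using uv by (simp add: mult_P3 rho_append)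
    have "snd (rho u) = 0" "\<forall>k>N. fst (rho u) k = 0" "snd (rho v) = 0" "\<forall>k>N. fst (rho v) k = 0"
      using eng.IH uv by simp_all
    then show ?case unfolding r by (simp add: mul_def)
  qed
  define n where "n = nat N"
  have "cls (ws n) \<in> generate P3 F" using F(3) ws_Q2 ws_Q3 by auto
  then have "\<forall>k>N. fst (lift rho (cls (ws n))) k = 0" by (rule inv[THEN conjunct2])
  then have "\<forall>k>N. fst (rho (ws n)) k = 0" by simp
  moreover have "int n + 1 > N" unfolding n_def by simp
  ultimately have "fst (rho (ws n)) (int n + 1) = 0" by blast
  then show False by (simp add: rho_ws dl_def)
qed

theorem mainTheorem9:
  shows "infinite (rcosets\<^bsub>P3\<lparr>carrier := Q {2}\<rparr>\<^esub> (Q {2} \<inter> Q {3}))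
       \<and> \<not> (\<exists>F. finite F \<and> F \<subseteq> Q {2} \<inter> Q {3} \<and> generate P3 F = Q {2} \<inter> Q {3})"
  using part1 part2 by blast

end
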